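(* Let $f:[a,b]\to\mathbb{R}$ be an $L$-Lipschitz convex function, and let $f(x^* )=\min_{x\in[a,b]}f(x)$. Set $x_1=\frac{3a+b}{4}$, $x_2=\frac{a+b}{2}$, $x_3=\frac{a+3b}{4}$. Suppose there exist constants $A\in\mathbb{R}$ and $\Delta>0$ such that $f(x_i)\in[A-\Delta,A+\Delta]$ for $i=1,2,3$. Then $$\max\{f(x_1),f(x_2),f(x_3)\}-f(x^* )\le4\Delta.$$ *)

theory Defs
  imports "HOL-Analysis.Analysis"
begin

end

theory Submission
  imports Defs
begin

lemma cvx3:
  fixes f :: "real \<Rightarrow> real"
  assumes "convex_on {a..b} f" "a \<le> p" "p \<le> q" "q \<le> r" "r \<le> b"
  shows "(r - p) * f q \<le> (r - q) * f p + (q - p) * f r"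
proof (cases "p = r")
  case True then show ?thesis using assms by simp
next
  case False
  then have pr: "p < r" using assms by simp
  define u where "u = (q - p) / (r - p)"
  have u0: "0 \<le> u" "u \<le> 1" using assms pr by (auto simp: u_def field_simps)
  have ur: "u * (r - p) = q - p" using pr by (simp add: u_def)
  have qe: "q = (1 - u) * p + u * r" using ur by (simp add: algebra_simps)
  have "f q \<le> (1 - u) * f p + u * f r"
    unfolding qe using convex_onD[OF assms(1), of u p r] u0 assms by auto
  then have "(r - p) * f q \<le> (r - p) * ((1 - u) * f p + u * f r)"
    using pr by (intro mult_left_mono) auto
  also have "\<dots> = (r - p) * f p - (u * (r - p)) * f p + (u * (r - p)) * f r"
    by (simp add: algebra_simps)
  also have "\<dots> = (r - q) * f p + (q - p) * f r"
    unfolding ur by (simp add: algebra_simps)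
  finally show ?thesis .
qed

lemma key:
  fixes d s f1 f2 fs :: real
  assumes "d > 0" "0 \<le> s" "s \<le> d" "(d + s) * f1 \<le> d * fs + s * f2"
  shows "fs \<ge> f1 - max 0 (f2 - f1)"
proof -
  have "d * (fs - f1) \<ge> s * (f1 - f2)" using assms(4) by (simp add: algebra_simps)
  moreover have "s * (f1 - f2) \<ge> - d * max 0 (f2 - f1)"
  proof (cases "f1 \<le> f2")
    case True
    have "s * (f2 - f1) \<le> d * (f2 - f1)" using True assms by (intro mult_right_mono) auto
    then show ?thesis using True by (simp add: algebra_simps)
  next
    case False then show ?thesis using assms by simp
  qed
  ultimately have "d * (fs - f1) \<ge> d * (- max 0 (f2 - f1))" by simp
  then have "fs - f1 \<ge> - max 0 (f2 - f1)" using assms(1) mult_le_cancel_left_pos by blast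
  then show ?thesis by simp
qed

theorem lemma11:
  fixes f :: "real \<Rightarrow> real" and a b L A \<Delta> xstar :: real
  assumes "a < b"
    and "L-lipschitz_on {a..b} f"
    and "convex_on {a..b} f"
    and "xstar \<in> {a..b}" and "\<forall>x\<in>{a..b}. f xstar \<le> f x"
    and "\<Delta> > 0"
    and "\<forall>x\<in>{(3*a+b)/4, (a+b)/2, (a+3*b)/4}. f x \<in> {A - \<Delta>..A + \<Delta>}"
  shows "max (f ((3*a+b)/4)) (max (f ((a+b)/2)) (f ((a+3*b)/4))) - f xstar \<le> 4 * \<Delta>"
proof -
  define x1 where "x1 = (3*a+b)/4"
  define x2 where "x2 = (a+b)/2"
  define x3 where "x3 = (a+3*b)/4"
  define d where "d = (b - a) / 4"
  have d: "d > 0" using assms(1) by (simp add: d_def)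
  have e: "x2 = x1 + d" "x3 = x2 + d" "x1 = a + d" "b = x3 + d"
    by (simp_all add: x1_def x2_def x3_def d_def field_simps)
  have b1: "A - \<Delta> \<le> f x1" "f x1 \<le> A + \<Delta>" using assms(7) by (auto simp: x1_def)
  have b2: "A - \<Delta> \<le> f x2" "f x2 \<le> A + \<Delta>" using assms(7) by (auto simp: x2_def)
  have b3: "A - \<Delta> \<le> f x3" "f x3 \<le> A + \<Delta>" using assms(7) by (auto simp: x3_def)
  have c: "(x3 - x1) * f x2 \<le> (x3 - x2) * f x1 + (x2 - x1) * f x3"
    using cvx3[OF assms(3), of x1 x2 x3] e d by auto
  then have "d * (2 * f x2) \<le> d * (f x1 + f x3)" using e d
    by (simp add: algebra_simps)
  then have c': "2 * f x2 \<le> f x1 + f x3" using d mult_le_cancel_left_pos by blast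
  have xs: "a \<le> xstar" "xstar \<le> b" using assms(4) by auto
  have "f xstar \<ge> A - 3 * \<Delta>"
  proof -
    consider "xstar \<le> x1" | "x1 \<le> xstar" "xstar \<le> x2" | "x2 \<le> xstar" "xstar \<le> x3"
      | "x3 \<le> xstar" by linarith
    then show ?thesis
    proof cases
      case 1
      have h: "(x2 - xstar) * f x1 \<le> (x2 - x1) * f xstar + (x1 - xstar) * f x2"
        using cvx3[OF assms(3), of xstar x1 x2] 1 e d xs by auto
      have "(d + (x1 - xstar)) * f x1 \<le> d * f xstar + (x1 - xstar) * f x2"
        using h e by (simp add: algebra_simps)
      from key[OF d _ _ this] 1 e xs have "f xstar \<ge> f x1 - max 0 (f x2 - f x1)" by auto
      then show ?thesis using b1 b2 b3 c' unfolding max_def by (smt (verit))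
    next
      case 2
      have h: "(x3 - xstar) * f x2 \<le> (x3 - x2) * f xstar + (x2 - xstar) * f x3"
        using cvx3[OF assms(3), of xstar x2 x3] 2 e d xs by auto
      have "(d + (x2 - xstar)) * f x2 \<le> d * f xstar + (x2 - xstar) * f x3"
        using h e by (simp add: algebra_simps)
      from key[OF d _ _ this] 2 e xs have "f xstar \<ge> f x2 - max 0 (f x3 - f x2)" by auto
      then show ?thesis using b1 b2 b3 c' unfolding max_def by (smt (verit))
    next
      case 3
      have h: "(xstar - x1) * f x2 \<le> (xstar - x2) * f x1 + (x2 - x1) * f xstar"
        using cvx3[OF assms(3), of x1 x2 xstar] 3 e d xs by auto
      have "(d + (xstar - x2)) * f x2 \<le> d * f xstar + (xstar - x2) * f x1"
        using h e by (simp add: algebra_simps)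
      from key[OF d _ _ this] 3 e xs have "f xstar \<ge> f x2 - max 0 (f x1 - f x2)" by auto
      then show ?thesis using b1 b2 b3 c' unfolding max_def by (smt (verit))
    next
      case 4
      have h: "(xstar - x2) * f x3 \<le> (xstar - x3) * f x2 + (x3 - x2) * f xstar"
        using cvx3[OF assms(3), of x2 x3 xstar] 4 e d xs by auto
      have "(d + (xstar - x3)) * f x3 \<le> d * f xstar + (xstar - x3) * f x2"
        using h e by (simp add: algebra_simps)
      from key[OF d _ _ this] 4 e xs have "f xstar \<ge> f x3 - max 0 (f x2 - f x3)" by auto
      then show ?thesis using b1 b2 b3 c' unfolding max_def by (smt (verit))
    qed
  qed
  then show ?thesis using b1 b2 b3 unfolding x1_def x2_def x3_def by auto
qed

end
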